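(* Let $\Lambda$ be a set with $1\leq|\Lambda|\leq\omega$. For every $\lambda\in\Lambda$ let $\mathbf{H}(\lambda)$ be a $\pi$-tree on a topological space $X_\lambda$ such that $\mathrm{cofin}\,\omega\gg\mathrm{Rise}_{\mathbf{H}(\lambda)}(X_\lambda)$. Let $Y$ be a topological space that has a $\pi$-tree. Then the Tychonoff product $Y\times\prod_{\lambda\in\Lambda}X_\lambda$ has a $\pi$-tree.
   Context: $\mathrm{cofin}\,\omega=\{\omega\setminus F: F\subseteq\omega\text{ finite}\}$. Neighbourhoods are not necessarily open. $\omega=\{0,1,2,\dots\}$, ${}^{<\omega}\omega$ is the set of finite sequences of natural numbers. A tree is a strict partial order in which the set of predecessors of every node is well-ordered; $\mathrm{height}(x)$ is the ordinal isomorphic to the set of predecessors of $x$; a branch is a maximal chain; $\mathrm{sons}(x)$ is the set of immediate successors of $x$; $0$ denotes the least node. A foliage tree is a pair $\mathbf{F}=(T,l)$ with $T$ a tree (skeleton) and $l$ a function on its nodes, $\mathbf{F}_x:=l(x)$; tree notions apply via the skeleton. $\mathrm{shoot}_{\mathbf{F}}(v)=\{\bigcup_{x\in C}\mathbf{F}_x: C\text{ a cofinite subset of }\mathrm{sons}_{\mathbf{F}}(v)\}$; $\mathrm{scope}_{\mathbf{F}}(p)=\{x:p\in\mathbf{F}_x\}$. For families $\gamma,\delta$ of sets, $\gamma\gg\delta$ means every nonempty $D\in\delta$ contains some nonempty $G\in\gamma$. $\mathrm{rise}_{\mathbf{F}}(p,U)=\{\mathrm{height}_{\mathbf{F}}(v):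 v\in\mathrm{scope}_{\mathbf{F}}(p),\ \mathrm{shoot}_{\mathbf{F}}(v)\gg\{U\}\}$; $\mathrm{Rise}_{\mathbf{F}}(X)=\{\mathrm{rise}_{\mathbf{F}}(p,U):p\in X,\ U\text{ a neighbourhood of }p\text{ in }X\}$. $\mathbf{F}$ is locally strict if each non-maximal leaf $\mathbf{F}_x$ is the disjoint union of $\mathbf{F}_s$, $s\in\mathrm{sons}(x)$; has strict branches if it has a node and for each branch $B$, $\bigcap_{x\in B}\mathbf{F}_x$ is a singleton; is open in $X$ if all leaves are open in $X$; is a foliage $\omega,\omega$-tree if its skeleton is order-isomorphic to $({}^{<\omega}\omega,\subsetneq)$. A Baire foliage tree on $X$ is an open in $X$, locally strict foliage $\omega,\omega$-tree with strict branches and $\mathbf{F}_{0_{\mathbf{F}}}=X$. $\mathbf{F}$ grows into $X$ if for every $p\in X$ and neighbourhood $U$ of $p$ there is $z\in\mathrm{scope}_{\mathbf{F}}(p)$ with $\mathrm{shoot}_{\mathbf{F}}(z)\gg\{U\}$. A $\pi$-tree on $X$ is a Baire foliage tree on $X$ that grows into $X$; a space has a $\pi$-tree if there is a $\pi$-tree on it. *)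

theory Defs
  imports "HOL-Analysis.Analysis"
begin

text \<open>A foliage omega,omega-tree is represented up to isomorphism of its skeleton
  by a labelling of the tree of finite sequences of naturals (nat list, ordered by
  proper prefix).  Root = [], sons of v are v @ [n], height v = length v,
  branches are the sets of initial segments of infinite sequences nat => nat.\<close>

type_synonym 'a foliage = "nat list \<Rightarrow> 'a set"

definition cofin_omega :: "nat set set" where
  "cofin_omega = {UNIV - F | F. finite F}"

definition gg :: "'b set set \<Rightarrow> 'b set set \<Rightarrow> bool" (infix "\<ggreater>" 50) where
  "\<gamma> \<ggreater> \<delta> \<longleftrightarrow> (\<forall>D\<in>\<delta>. D \<noteq> {} \<longrightarrow> (\<exists>G\<in>\<gamma>. G \<noteq> {} \<and> G \<subseteq> D))"

definition sons :: "nat list \<Rightarrow> nat list set" where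
  "sons v = {v @ [n] | n. True}"

definition shoot :: "'a foliage \<Rightarrow> nat list \<Rightarrow> 'a set set" where
  "shoot F v = {\<Union>x\<in>C. F x | C. C \<subseteq> sons v \<and> finite (sons v - C)}"

definition scope :: "'a foliage \<Rightarrow> 'a \<Rightarrow> nat list set" where
  "scope F p = {x. p \<in> F x}"

definition nbhd :: "'a topology \<Rightarrow> 'a \<Rightarrow> 'a set \<Rightarrow> bool" where
  "nbhd X p U \<longleftrightarrow> U \<subseteq> topspace X \<and> (\<exists>V. openin X V \<and> p \<in> V \<and> V \<subseteq> U)"

definition rise :: "'a foliage \<Rightarrow> 'a \<Rightarrow> 'a set \<Rightarrow> nat set" where
  "rise F p U = {length v | v. v \<in> scope F p \<and> shoot F v \<ggreater> {U}}"

definition Rise :: "'a foliage \<Rightarrow> 'a topology \<Rightarrow> nat set set" where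
  "Rise F X = {rise F p U | p U. p \<in> topspace X \<and> nbhd X p U}"

definition locally_strict :: "'a foliage \<Rightarrow> bool" where
  "locally_strict F \<longleftrightarrow> (\<forall>x. F x = (\<Union>s\<in>sons x. F s) \<and>
      (\<forall>s\<in>sons x. \<forall>t\<in>sons x. s \<noteq> t \<longrightarrow> F s \<inter> F t = {}))"

definition strict_branches :: "'a foliage \<Rightarrow> bool" where
  "strict_branches F \<longleftrightarrow> (\<forall>f :: nat \<Rightarrow> nat. \<exists>p. (\<Inter>n. F (map f [0..<n])) = {p})"

definition open_foliage :: "'a topology \<Rightarrow> 'a foliage \<Rightarrow> bool" where
  "open_foliage X F \<longleftrightarrow> (\<forall>x. openin X (F x))"

definition baire_foliage_tree :: "'a topology \<Rightarrow> 'a foliage \<Rightarrow> bool" where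
  "baire_foliage_tree X F \<longleftrightarrow> open_foliage X F \<and> locally_strict F \<and> strict_branches F
      \<and> F [] = topspace X"

definition grows_into :: "'a foliage \<Rightarrow> 'a topology \<Rightarrow> bool" where
  "grows_into F X \<longleftrightarrow> (\<forall>p\<in>topspace X. \<forall>U. nbhd X p U \<longrightarrow>
      (\<exists>z\<in>scope F p. shoot F z \<ggreater> {U}))"

definition pi_tree :: "'a topology \<Rightarrow> 'a foliage \<Rightarrow> bool" where
  "pi_tree X F \<longleftrightarrow> baire_foliage_tree X F \<and> grows_into F X"

definition has_pi_tree :: "'a topology \<Rightarrow> bool" where
  "has_pi_tree X \<longleftrightarrow> (\<exists>F. pi_tree X F)"

end

theory Submission
  imports Defs
begin


definition cyl :: "('p \<Rightarrow> nat \<Rightarrow> nat) \<Rightarrow> 'p set \<Rightarrow> 'p foliage" where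
  "cyl \<phi> S s = {p \<in> S. \<forall>j<length s. \<phi> p j = s ! j}"

lemma cyl_snoc: "p \<in> cyl \<phi> S (s @ [n]) \<longleftrightarrow> p \<in> cyl \<phi> S s \<and> \<phi> p (length s) = n"
proof -
  have "(\<forall>j<length (s @ [n]). \<phi> p j = (s @ [n]) ! j) \<longleftrightarrow>
        (\<forall>j<length s. \<phi> p j = s ! j) \<and> \<phi> p (length s) = n"
  proof
    assume a: "\<forall>j<length (s @ [n]). \<phi> p j = (s @ [n]) ! j"
    have "\<forall>j<length s. \<phi> p j = s ! j"
    proof (intro allI impI)
      fix j assume "j < length s"
      then show "\<phi> p j = s ! j" using a[rule_format, of j] by (simp add: nth_append)
    qed
    moreover have "\<phi> p (length s) = n" using a[rule_format, of "length s"] by simp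
    ultimately show "(\<forall>j<length s. \<phi> p j = s ! j) \<and> \<phi> p (length s) = n" by blast
  next
    assume a: "(\<forall>j<length s. \<phi> p j = s ! j) \<and> \<phi> p (length s) = n"
    show "\<forall>j<length (s @ [n]). \<phi> p j = (s @ [n]) ! j"
    proof (intro allI impI)
      fix j assume "j < length (s @ [n])"
      then have "j < length s \<or> j = length s" by auto
      then show "\<phi> p j = (s @ [n]) ! j" using a by (auto simp: nth_append)
    qed
  qed
  then show ?thesis unfolding cyl_def by blast
qed

lemma cyl_props:
  assumes "bij_betw \<phi> S UNIV"
  shows "locally_strict (cyl \<phi> S)" "strict_branches (cyl \<phi> S)" "cyl \<phi> S [] = S"
proof -
  show "locally_strict (cyl \<phi> S)"
    unfolding locally_strict_def
  proof (intro allI conjI ballI impI)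
    fix x
    show "cyl \<phi> S x = (\<Union>s\<in>sons x. cyl \<phi> S s)"
    proof (intro equalityI subsetI)
      fix p assume "p \<in> cyl \<phi> S x"
      then have "p \<in> cyl \<phi> S (x @ [\<phi> p (length x)])" by (simp add: cyl_snoc)
      moreover have "x @ [\<phi> p (length x)] \<in> sons x" by (auto simp: sons_def)
      ultimately show "p \<in> (\<Union>s\<in>sons x. cyl \<phi> S s)" by blast
    next
      fix p assume "p \<in> (\<Union>s\<in>sons x. cyl \<phi> S s)"
      then obtain n where "p \<in> cyl \<phi> S (x @ [n])" by (auto simp: sons_def)
      then show "p \<in> cyl \<phi> S x" by (simp add: cyl_snoc)
    qed
    fix s t assume "s \<in> sons x" "t \<in> sons x" "s \<noteq> t"
    then obtain n m where "s = x @ [n]" "t = x @ [m]" "n \<noteq> m" by (auto simp: sons_def)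
    then show "cyl \<phi> S s \<inter> cyl \<phi> S t = {}" by (auto simp: cyl_snoc)
  qed
  show "cyl \<phi> S [] = S" by (simp add: cyl_def)
  show "strict_branches (cyl \<phi> S)"
    unfolding strict_branches_def
  proof
    fix f :: "nat \<Rightarrow> nat"
    have "f \<in> \<phi> ` S" using assms by (simp add: bij_betw_def)
    then obtain p where p: "p \<in> S" "\<phi> p = f" by blast
    have "(\<Inter>n. cyl \<phi> S (map f [0..<n])) = {p}"
    proof (intro equalityI subsetI)
      fix q assume q: "q \<in> (\<Inter>n. cyl \<phi> S (map f [0..<n]))"
      have "\<forall>j. \<phi> q j = f j"
      proof
        fix j from q have "q \<in> cyl \<phi> S (map f [0..<Suc j])" by blast
        thus "\<phi> q j = f j" by (auto simp: cyl_def nth_append)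
      qed
      then have "\<phi> q = \<phi> p" using p by auto
      moreover have "q \<in> S" using q by (auto simp: cyl_def)
      ultimately show "q \<in> {p}" using p assms by (auto simp: bij_betw_def inj_on_def)
    next
      fix q assume "q \<in> {p}" thus "q \<in> (\<Inter>n. cyl \<phi> S (map f [0..<n]))" using p by (auto simp: cyl_def)
    qed
    thus "\<exists>p. (\<Inter>n. cyl \<phi> S (map f [0..<n])) = {p}" by blast
  qed
qed

lemma cyl_nonempty:
  assumes "bij_betw \<phi> S UNIV" shows "cyl \<phi> S s \<noteq> {}"
proof -
  define f where "f = (\<lambda>n. if n < length s then s ! n else (0::nat))"
  have "f \<in> \<phi> ` S" using assms by (simp add: bij_betw_def)
  then obtain p where p: "p \<in> S" "\<phi> p = f" by blast
  have "\<forall>j<length s. \<phi> p j = s ! j" using p(2) unfolding f_def by simp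
  then have "p \<in> cyl \<phi> S s" using p(1) unfolding cyl_def by blast
  thus ?thesis by blast
qed

primrec pth :: "'a foliage \<Rightarrow> 'a \<Rightarrow> nat \<Rightarrow> nat list" where
  "pth F p 0 = []"
| "pth F p (Suc k) = pth F p k @ [SOME n. p \<in> F (pth F p k @ [n])]"

lemma length_pth[simp]: "length (pth F p k) = k"
  by (induct k) auto

lemma pth_nth: "j < k \<Longrightarrow> pth F p k ! j = pth F p (Suc j) ! j"
proof (induct k)
  case (Suc k) thus ?case by (cases "j < k") (auto simp: nth_append less_Suc_eq)
qed simp

lemma rep:
  assumes "baire_foliage_tree X F"
  shows "\<exists>\<phi>. bij_betw \<phi> (topspace X) UNIV \<and> F = cyl \<phi> (topspace X)"
proof -
  let ?S = "topspace X"
  have ls: "locally_strict F" and sb: "strict_branches F" and root: "F [] = ?S"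
    using assms by (auto simp: baire_foliage_tree_def)
  have L1: "F x = (\<Union>s\<in>sons x. F s)" for x
    using ls unfolding locally_strict_def by blast
  have L2: "\<And>s t. s \<in> sons x \<Longrightarrow> t \<in> sons x \<Longrightarrow> s \<noteq> t \<Longrightarrow> F s \<inter> F t = {}" for x
    using ls unfolding locally_strict_def by blast
  have ex: "\<exists>n. p \<in> F (x @ [n])" if "p \<in> F x" for p x
  proof -
    from that L1[of x] obtain s where "s \<in> sons x" "p \<in> F s" by blast
    then show ?thesis unfolding sons_def by blast
  qed
  have un: "n = m" if "p \<in> F (x @ [n])" "p \<in> F (x @ [m])" for p x n m
  proof (rule ccontr)
    assume "n \<noteq> m"
    then have "F (x @ [n]) \<inter> F (x @ [m]) = {}" by (intro L2) (auto simp: sons_def)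
    then show False using that by blast
  qed
  have sub: "F (x @ [n]) \<subseteq> F x" for x n
  proof -
    have "x @ [n] \<in> sons x" by (auto simp: sons_def)
    then show ?thesis using L1[of x] by blast
  qed
  have subS: "F s \<subseteq> ?S" for s
  proof (induct s rule: rev_induct)
    case Nil thus ?case using root by simp
  next
    case (snoc n s) thus ?case using sub by blast
  qed
  define \<phi> where "\<phi> p j = pth F p (Suc j) ! j" for p j
  have pth_phi: "j < k \<Longrightarrow> pth F p k ! j = \<phi> p j" for p j k
    unfolding \<phi>_def by (rule pth_nth)
  have inpth: "p \<in> ?S \<Longrightarrow> p \<in> F (pth F p k)" for p k
  proof (induct k)
    case 0 thus ?case using root by simp
  next
    case (Suc k)
    then have h: "p \<in> F (pth F p k)" by simp
    have "p \<in> F (pth F p k @ [SOME n. p \<in> F (pth F p k @ [n])])"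
      by (rule someI_ex[OF ex[OF h]])
    then show ?case by simp
  qed
  have pth_eq: "s = pth F p (length s) \<longleftrightarrow> (\<forall>j<length s. \<phi> p j = s ! j)" for p s
    apply (rule iffI)
     apply (metis pth_phi)
    by (auto simp: pth_phi intro!: nth_equalityI)
  have Fs: "F s = cyl \<phi> ?S s" for s
  proof (intro equalityI subsetI)
    fix p assume "p \<in> F s"
    moreover have "p \<in> F s \<Longrightarrow> s = pth F p (length s)"
    proof (induct s rule: rev_induct)
      case Nil thus ?case by simp
    next
      case (snoc n s)
      have "p \<in> F s" using snoc.prems sub by blast
      then have s: "s = pth F p (length s)" using snoc.hyps by blast
      have "p \<in> F (pth F p (Suc (length s)))" using inpth subS \<open>p \<in> F s\<close> by blast
      then have "p \<in> F (s @ [SOME n. p \<in> F (s @ [n])])" using s by (metis pth.simps(2))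
      then have "n = (SOME n. p \<in> F (s @ [n]))" using un snoc.prems by blast
      then show ?case using s by (metis length_append_singleton pth.simps(2))
    qed
    ultimately show "p \<in> cyl \<phi> ?S s" using subS pth_eq by (auto simp: cyl_def)
  next
    fix p assume "p \<in> cyl \<phi> ?S s"
    then have "p \<in> ?S" "s = pth F p (length s)" using pth_eq by (auto simp: cyl_def)
    thus "p \<in> F s" using inpth by metis
  qed
  have "bij_betw \<phi> ?S UNIV"
    unfolding bij_betw_def
  proof
    show "inj_on \<phi> ?S"
    proof (rule inj_onI)
      fix p q assume pq: "p \<in> ?S" "q \<in> ?S" "\<phi> p = \<phi> q"
      obtain r where r: "(\<Inter>n. F (map (\<phi> p) [0..<n])) = {r}" using sb unfolding strict_branches_def by blast
      have "p \<in> (\<Inter>n. F (map (\<phi> p) [0..<n]))" "q \<in> (\<Inter>n. F (map (\<phi> p) [0..<n]))"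
        using pq by (auto simp: Fs cyl_def)
      thus "p = q" using r by auto
    qed
    show "\<phi> ` ?S = UNIV"
    proof (intro equalityI subsetI)
      fix f :: "nat \<Rightarrow> nat"
      obtain r where r: "(\<Inter>n. F (map f [0..<n])) = {r}" using sb unfolding strict_branches_def by blast
      then have "\<forall>n. r \<in> F (map f [0..<n])" by auto
      have "r \<in> ?S" using r subS by blast
      moreover have "\<forall>j. \<phi> r j = f j"
      proof
        fix j
        have "r \<in> F (map f [0..<Suc j])" using r by blast
        then have "\<forall>ja<Suc j. \<phi> r ja = (map f [0..<Suc j]) ! ja" by (simp add: Fs cyl_def)
        then show "\<phi> r j = f j" by (metis lessI diff_zero nth_map_upt plus_nat.add_0)
      qed
      ultimately show "f \<in> \<phi> ` ?S" by (metis ext image_eqI)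
    qed simp
  qed
  moreover have "F = cyl \<phi> ?S" by (rule ext) (rule Fs)
  ultimately show ?thesis by blast
qed



lemma shoot_E:
  assumes "shoot F v \<ggreater> {V}" "V \<noteq> {}"
  shows "\<exists>E. finite E \<and> (\<forall>i. i \<notin> E \<longrightarrow> F (v @ [i]) \<subseteq> V)"
proof -
  obtain G where G: "G \<in> shoot F v" "G \<subseteq> V" using assms unfolding gg_def by blast
  then obtain C where C: "G = (\<Union>x\<in>C. F x)" "C \<subseteq> sons v" "finite (sons v - C)"
    unfolding shoot_def by blast
  define E where "E = {i. v @ [i] \<notin> C}"
  have "(\<lambda>i. v @ [i]) ` E \<subseteq> sons v - C" by (auto simp: E_def sons_def)
  then have "finite ((\<lambda>i. v @ [i]) ` E)" using C(3) finite_subset by blast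
  moreover have "inj_on (\<lambda>i. v @ [i]) E" by (auto simp: inj_on_def)
  ultimately have "finite E" using finite_imageD by blast
  moreover have "\<forall>i. i \<notin> E \<longrightarrow> F (v @ [i]) \<subseteq> V" using C G by (auto simp: E_def)
  ultimately show ?thesis by blast
qed

lemma cyl_scope:
  assumes "p \<in> cyl \<phi> S z" shows "z = map (\<phi> p) [0..<length z]"
  using assms by (auto simp: cyl_def intro!: nth_equalityI)

lemma cyl_pre: "p \<in> S \<Longrightarrow> p \<in> cyl \<phi> S (map (\<phi> p) [0..<h])"
  by (simp add: cyl_def)

lemma nbhd_nonempty: "nbhd X p V \<Longrightarrow> p \<in> V"
  unfolding nbhd_def by blast

lemma rise_unbounded:
  assumes bij: "bij_betw \<phi> (topspace Y) UNIV"
    and op: "\<And>s. openin Y (cyl \<phi> (topspace Y) s)"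
    and gr: "grows_into (cyl \<phi> (topspace Y)) Y"
    and y: "y \<in> topspace Y" and V: "nbhd Y y V"
  shows "\<exists>h\<ge>m. \<exists>E. finite E \<and> (\<forall>i. i \<notin> E \<longrightarrow> cyl \<phi> (topspace Y) (map (\<phi> y) [0..<h] @ [i]) \<subseteq> V)"
proof -
  let ?S = "topspace Y"
  obtain W where W: "openin Y W" "y \<in> W" "W \<subseteq> V" "V \<subseteq> ?S" using V unfolding nbhd_def by blast
  define V' where "V' = V \<inter> cyl \<phi> ?S (map (\<phi> y) [0..<m])"
  have "nbhd Y y V'"
    unfolding nbhd_def
  proof (intro conjI exI)
    show "V' \<subseteq> ?S" using W(4) by (auto simp: V'_def)
    show "openin Y (W \<inter> cyl \<phi> ?S (map (\<phi> y) [0..<m]))" using W(1) op by blast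
    show "y \<in> W \<inter> cyl \<phi> ?S (map (\<phi> y) [0..<m])" using W(2) y by (simp add: cyl_pre)
    show "W \<inter> cyl \<phi> ?S (map (\<phi> y) [0..<m]) \<subseteq> V'" using W(3) by (auto simp: V'_def)
  qed
  then obtain z where z: "z \<in> scope (cyl \<phi> ?S) y" "shoot (cyl \<phi> ?S) z \<ggreater> {V'}"
    using gr y unfolding grows_into_def by blast
  have yz: "y \<in> cyl \<phi> ?S z" using z(1) by (simp add: scope_def)
  then have zeq: "z = map (\<phi> y) [0..<length z]" by (rule cyl_scope)
  obtain E where E: "finite E" "\<forall>i. i \<notin> E \<longrightarrow> cyl \<phi> ?S (z @ [i]) \<subseteq> V'"
    using shoot_E[OF z(2)] nbhd_nonempty[OF \<open>nbhd Y y V'\<close>] by blast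
  have "length z \<ge> m"
  proof (rule ccontr)
    assume "\<not> m \<le> length z"
    then have hm: "length z < m" by simp
    obtain i where i: "i \<notin> insert (\<phi> y (length z)) E"
      using ex_new_if_finite[OF infinite_UNIV_nat] E(1) by (meson finite_insert)
    obtain q where q: "q \<in> cyl \<phi> ?S (z @ [i])" using cyl_nonempty[OF bij] by blast
    then have "q \<in> V'" using E(2) i by blast
    then have "\<phi> q (length z) = \<phi> y (length z)" using hm by (auto simp: V'_def cyl_def)
    moreover have "\<phi> q (length z) = i" using q by (simp add: cyl_snoc)
    ultimately show False using i by simp
  qed
  moreover have "\<forall>i. i \<notin> E \<longrightarrow> cyl \<phi> ?S (map (\<phi> y) [0..<length z] @ [i]) \<subseteq> V"
    using E(2) zeq by (auto simp: V'_def)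
  ultimately show ?thesis using E(1) by blast
qed

lemma rise_cofinite:
  assumes gr: "grows_into (cyl \<phi> (topspace X)) X"
    and cof: "cofin_omega \<ggreater> Rise (cyl \<phi> (topspace X)) X"
    and x: "x \<in> topspace X" and V: "nbhd X x V"
  shows "\<exists>N. \<forall>h\<ge>N. \<exists>E. finite E \<and> (\<forall>i. i \<notin> E \<longrightarrow> cyl \<phi> (topspace X) (map (\<phi> x) [0..<h] @ [i]) \<subseteq> V)"
proof -
  let ?S = "topspace X"
  let ?F = "cyl \<phi> ?S"
  obtain z where z: "z \<in> scope ?F x" "shoot ?F z \<ggreater> {V}"
    using gr x V unfolding grows_into_def by blast
  have "length z \<in> rise ?F x V" using z unfolding rise_def by blast
  moreover have "rise ?F x V \<in> Rise ?F X" using x V unfolding Rise_def by blast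
  ultimately obtain G where G: "G \<in> cofin_omega" "G \<subseteq> rise ?F x V" "G \<noteq> {}"
    using cof unfolding gg_def by blast
  then obtain Fin where Fin: "finite Fin" "G = UNIV - Fin" unfolding cofin_omega_def by blast
  then obtain N where N: "Fin \<subseteq> {..<N}" using finite_nat_bounded by blast
  have "\<exists>E. finite E \<and> (\<forall>i. i \<notin> E \<longrightarrow> ?F (map (\<phi> x) [0..<h] @ [i]) \<subseteq> V)" if "h \<ge> N" for h
  proof -
    have "h \<notin> Fin" using that N by auto
    then have "h \<in> G" using Fin(2) by blast
    then have "h \<in> rise ?F x V" using G(2) by blast
    then obtain v where v: "h = length v" "v \<in> scope ?F x" "shoot ?F v \<ggreater> {V}"
      unfolding rise_def by blast
    have "v = map (\<phi> x) [0..<h]" using v(1,2) cyl_scope[of x \<phi> ?S v] by (simp add: scope_def)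
    then show ?thesis using shoot_E[OF v(3) ] nbhd_nonempty[OF V] by blast
  qed
  then show ?thesis by blast
qed



lemma cyl_map: "p \<in> cyl \<phi> S (map (\<phi> q) [0..<L]) \<longleftrightarrow> p \<in> S \<and> (\<forall>j<L. \<phi> p j = \<phi> q j)"
  by (auto simp: cyl_def)

lemma cyl_map_snoc: "p \<in> cyl \<phi> S (map (\<phi> q) [0..<L] @ [i]) \<longleftrightarrow> p \<in> S \<and> (\<forall>j<L. \<phi> p j = \<phi> q j) \<and> \<phi> p L = i"
  by (simp add: cyl_snoc cyl_map)

locale PT =
  fixes Lam :: "'l set" and e :: "nat \<Rightarrow> 'l" and X :: "'l \<Rightarrow> 'a topology"
    and \<phi> :: "'l \<Rightarrow> 'a \<Rightarrow> nat \<Rightarrow> nat"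
    and Y :: "'b topology" and \<psi> :: "'b \<Rightarrow> nat \<Rightarrow> nat"
  assumes rng: "range e = Lam"
    and bijY: "bij_betw \<psi> (topspace Y) UNIV"
    and bijX: "\<And>l. l \<in> Lam \<Longrightarrow> bij_betw (\<phi> l) (topspace (X l)) UNIV"
begin

definition act :: "nat \<Rightarrow> 'l set" where "act d = e ` {..d}"
definition kk :: "'l \<Rightarrow> nat" where "kk l = (LEAST k. e k = l)"
definition tup :: "nat \<Rightarrow> 'b \<times> ('l \<Rightarrow> 'a) \<Rightarrow> nat \<times> ('l \<Rightarrow> nat)" where
  "tup d z = (\<psi> (fst z) d, \<lambda>l. if l \<in> act d then \<phi> l (snd z l) (d - kk l) else 0)"
definition TT :: "nat \<Rightarrow> (nat \<times> ('l \<Rightarrow> nat)) set" where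
  "TT d = {u. \<forall>l. l \<notin> act d \<longrightarrow> snd u l = 0}"
definition mn :: "nat \<Rightarrow> nat \<times> ('l \<Rightarrow> nat) \<Rightarrow> nat" where
  "mn d u = Min (insert (fst u) (snd u ` act d))"
definition Tn :: "nat \<Rightarrow> nat \<Rightarrow> (nat \<times> ('l \<Rightarrow> nat)) set" where
  "Tn d n = {u \<in> TT d. mn d u = n}"
definition bb :: "nat \<Rightarrow> nat \<Rightarrow> nat \<Rightarrow> nat \<times> ('l \<Rightarrow> nat)" where
  "bb d n = from_nat_into (Tn d n)"
definition Phi :: "'b \<times> ('l \<Rightarrow> 'a) \<Rightarrow> nat \<Rightarrow> nat" where
  "Phi z m = (if even m then mn (m div 2) (tup (m div 2) z)
     else inv_into UNIV (bb (m div 2) (mn (m div 2) (tup (m div 2) z))) (tup (m div 2) z))"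
definition SZ :: "('b \<times> ('l \<Rightarrow> 'a)) set" where
  "SZ = topspace Y \<times> PiE Lam (\<lambda>l. topspace (X l))"

lemma ekk: "l \<in> Lam \<Longrightarrow> e (kk l) = l"
  unfolding kk_def by (rule LeastI_ex) (use rng in blast)

lemma act_iff: "l \<in> act d \<longleftrightarrow> l \<in> Lam \<and> kk l \<le> d"
proof
  assume "l \<in> act d"
  then obtain k where k: "k \<le> d" "e k = l" by (auto simp: act_def)
  then have "kk l \<le> k" unfolding kk_def by (rule_tac Least_le) simp
  then show "l \<in> Lam \<and> kk l \<le> d" using k rng by auto
next
  assume "l \<in> Lam \<and> kk l \<le> d"
  then show "l \<in> act d" using ekk unfolding act_def by (metis atMost_iff image_eqI)
qed

lemma fin_act: "finite (act d)" by (simp add: act_def)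

lemma act_ne: "act d \<noteq> {}" by (simp add: act_def)

lemma TT_count: "countable (TT d)"
proof -
  let ?g = "\<lambda>(i::nat, f::'l \<Rightarrow> nat). (i, \<lambda>l. if l \<in> act d then f l else 0)"
  have "TT d \<subseteq> ?g ` (UNIV \<times> PiE (act d) (\<lambda>_. UNIV))"
  proof
    fix u assume u: "u \<in> TT d"
    have "u = ?g (fst u, restrict (snd u) (act d))"
      using u by (cases u) (auto simp: TT_def fun_eq_iff)
    moreover have "(fst u, restrict (snd u) (act d)) \<in> UNIV \<times> PiE (act d) (\<lambda>_. UNIV)" by simp
    ultimately show "u \<in> ?g ` (UNIV \<times> PiE (act d) (\<lambda>_. UNIV))" by blast
  qed
  moreover have "countable ((UNIV :: nat set) \<times> PiE (act d) (\<lambda>_. (UNIV :: nat set)))"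
  proof -
    have c1: "countable (PiE (act d) (\<lambda>_. (UNIV :: nat set)))"
      by (rule countable_PiE[OF fin_act]) simp
    show ?thesis by (rule countable_SIGMA) (auto intro: c1 countableI_type)
  qed
  ultimately show ?thesis by (meson countable_image countable_subset)
qed

lemma Tn_inf: "infinite (Tn d n)"
proof -
  let ?g = "\<lambda>j::nat. (n, \<lambda>l. if l \<in> act d then n + j else 0)"
  have "inj ?g"
  proof
    fix a b assume ab: "?g a = ?g b"
    obtain l where l: "l \<in> act d" using act_ne by blast
    have "snd (?g a) l = snd (?g b) l" using ab by simp
    then show "a = b" using l by simp
  qed
  moreover have "range ?g \<subseteq> Tn d n"
  proof
    fix u assume "u \<in> range ?g"
    then obtain j where j: "u = ?g j" by blast
    have "snd u ` act d = {n + j}" using act_ne j by auto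
    then have "mn d u = n" using j by (simp add: mn_def)
    then show "u \<in> Tn d n" using j by (simp add: Tn_def TT_def)
  qed
  ultimately show ?thesis using range_inj_infinite infinite_super by blast
qed

lemma bb_bij: "bij_betw (bb d n) UNIV (Tn d n)"
  unfolding bb_def
  by (rule bij_betw_from_nat_into) (use TT_count Tn_inf in \<open>auto simp: Tn_def intro: countable_subset\<close>)

lemma tup_Tn: "tup d z \<in> Tn d (mn d (tup d z))"
  by (simp add: Tn_def TT_def tup_def)

lemma Phi_dec: "bb d (Phi z (2*d)) (Phi z (2*d+1)) = tup d z"
proof -
  have "Phi z (2*d) = mn d (tup d z)" by (simp add: Phi_def)
  moreover have "Phi z (2*d+1) = inv_into UNIV (bb d (mn d (tup d z))) (tup d z)" by (simp add: Phi_def)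
  moreover have "tup d z \<in> range (bb d (mn d (tup d z)))"
    using bb_bij[of d "mn d (tup d z)"] tup_Tn by (simp add: bij_betw_def)
  ultimately show ?thesis by (simp add: f_inv_into_f)
qed

lemma tup_eq_from_Phi:
  assumes "Phi z (2*d) = Phi z' (2*d)" "Phi z (2*d+1) = Phi z' (2*d+1)"
  shows "tup d z = tup d z'"
  using Phi_dec[of d z] Phi_dec[of d z'] assms by simp

lemma Phi_from_tup:
  assumes "tup (m div 2) z = tup (m div 2) z'"
  shows "Phi z m = Phi z' m"
  using assms by (simp add: Phi_def)

lemma bijZ: "bij_betw Phi SZ UNIV"
  unfolding bij_betw_def
proof
  show "inj_on Phi SZ"
  proof (rule inj_onI)
    fix z z' assume zz: "z \<in> SZ" "z' \<in> SZ" "Phi z = Phi z'"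
    then have T: "tup d z = tup d z'" for d by (intro tup_eq_from_Phi) auto
    obtain y x y' x' where zs: "z = (y, x)" "z' = (y', x')" by (cases z, cases z')
    have "\<psi> y d = \<psi> y' d" for d using T[of d] zs by (simp add: tup_def)
    then have "\<psi> y = \<psi> y'" by blast
    moreover have "y \<in> topspace Y" "y' \<in> topspace Y" using zz zs by (auto simp: SZ_def)
    ultimately have yy: "y = y'" using bijY by (auto simp: bij_betw_def inj_on_def)
    have "x l = x' l" for l
    proof (cases "l \<in> Lam")
      case True
      have "\<phi> l (x l) h = \<phi> l (x' l) h" for h
      proof -
        have la: "l \<in> act (kk l + h)" using True by (simp add: act_iff)
        have "snd (tup (kk l + h) z) l = snd (tup (kk l + h) z') l" using T by simp
        then show ?thesis using la zs by (simp add: tup_def)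
      qed
      then have "\<phi> l (x l) = \<phi> l (x' l)" by blast
      moreover have "x l \<in> topspace (X l)" "x' l \<in> topspace (X l)" using zz zs True by (auto simp: SZ_def)
      ultimately show ?thesis using bijX[OF True] by (auto simp: bij_betw_def inj_on_def)
    next
      case False
      then show ?thesis using zz zs by (auto simp: SZ_def PiE_def extensional_def)
    qed
    then show "z = z'" using zs yy by auto
  qed
  show "Phi ` SZ = UNIV"
  proof (intro equalityI subsetI)
    fix f :: "nat \<Rightarrow> nat"
    define u where "u d = bb d (f (2*d)) (f (2*d+1))" for d
    have uT: "u d \<in> Tn d (f (2*d))" for d
      using bb_bij[of d "f (2*d)"] unfolding u_def bij_betw_def by blast
    define gY where "gY d = fst (u d)" for d
    define y where "y = inv_into (topspace Y) \<psi> gY"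
    have y: "y \<in> topspace Y" "\<psi> y = gY"
      using bijY unfolding y_def bij_betw_def by (auto intro: inv_into_into f_inv_into_f)
    define x where "x = (\<lambda>l. if l \<in> Lam then inv_into (topspace (X l)) (\<phi> l) (\<lambda>h. snd (u (kk l + h)) l) else undefined)"
    have x1: "x l \<in> topspace (X l)" "\<phi> l (x l) = (\<lambda>h. snd (u (kk l + h)) l)" if "l \<in> Lam" for l
      using bijX[OF that] that unfolding x_def bij_betw_def by (auto intro: inv_into_into f_inv_into_f)
    have xP: "x \<in> PiE Lam (\<lambda>l. topspace (X l))" using x1 by (auto simp: x_def)
    have tu: "tup d (y, x) = u d" for d
    proof -
      have "snd (tup d (y, x)) l = snd (u d) l" for l
      proof (cases "l \<in> act d")
        case True
        then have "l \<in> Lam" "kk l \<le> d" by (auto simp: act_iff)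
        then show ?thesis using True x1 by (simp add: tup_def)
      next
        case False
        then show ?thesis using uT[of d] by (simp add: tup_def Tn_def TT_def)
      qed
      moreover have "fst (tup d (y, x)) = fst (u d)" using y by (simp add: tup_def gY_def)
      ultimately show ?thesis by (simp add: prod_eq_iff fun_eq_iff)
    qed
    have "Phi (y, x) m = f m" for m
    proof -
      define d where "d = m div 2"
      have mnu: "mn d (u d) = f (2*d)" using uT[of d] by (simp add: Tn_def)
      show ?thesis
      proof (cases "even m")
        case True
        then have "m = 2*d" by (simp add: d_def)
        then show ?thesis using mnu tu True by (simp add: Phi_def d_def)
      next
        case False
        then have m: "m = 2*d+1" by (simp add: d_def)
        have "inv_into UNIV (bb d (f (2*d))) (u d) = f (2*d+1)"
          unfolding u_def using bb_bij[of d "f (2*d)"] by (simp add: bij_betw_def inv_into_f_f)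
        then show ?thesis using mnu tu False m by (simp add: Phi_def d_def[symmetric])
      qed
    qed
    then have "Phi (y, x) = f" by blast
    moreover have "(y, x) \<in> SZ" using y xP by (simp add: SZ_def)
    ultimately show "f \<in> Phi ` SZ" by blast
  qed simp
qed

end



context PT
begin

lemma tup_agree:
  assumes "\<forall>d<L. \<psi> y' d = \<psi> y d" "\<forall>l\<in>act L. \<forall>h<L. \<phi> l (x' l) h = \<phi> l (x l) h" "d < L"
  shows "tup d (y', x') = tup d (y, x)"
proof -
  have "snd (tup d (y', x')) l = snd (tup d (y, x)) l" for l
  proof (cases "l \<in> act d")
    case True
    then have "l \<in> act L" "d - kk l < L" using assms(3) by (auto simp: act_iff)
    then show ?thesis using True assms(2) by (simp add: tup_def)
  qed (simp add: tup_def)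
  moreover have "fst (tup d (y', x')) = fst (tup d (y, x))" using assms by (simp add: tup_def)
  ultimately show ?thesis by (simp add: prod_eq_iff fun_eq_iff)
qed

lemma open_cyl:
  assumes opY: "\<And>s. openin Y (cyl \<psi> (topspace Y) s)"
    and opX: "\<And>l s. l \<in> Lam \<Longrightarrow> openin (X l) (cyl (\<phi> l) (topspace (X l)) s)"
  shows "openin (prod_topology Y (product_topology X Lam)) (cyl Phi SZ s)"
  unfolding openin_subopen[of _ "cyl Phi SZ s"]
proof
  fix z assume zin: "z \<in> cyl Phi SZ s"
  obtain y x where zs: "z = (y, x)" by (cases z)
  let ?L = "length s"
  define WY where "WY = cyl \<psi> (topspace Y) (map (\<psi> y) [0..<?L])"
  define WX where "WX = (\<lambda>l. if l \<in> act ?L then cyl (\<phi> l) (topspace (X l)) (map (\<phi> l (x l)) [0..<?L]) else topspace (X l))"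
  have zS: "y \<in> topspace Y" "x \<in> PiE Lam (\<lambda>l. topspace (X l))" using zin zs by (auto simp: cyl_def SZ_def)
  have "openin (product_topology X Lam) (PiE Lam WX)"
  proof -
    have "{l \<in> Lam. WX l \<noteq> topspace (X l)} \<subseteq> act ?L" by (auto simp: WX_def)
    then have "finite {l \<in> Lam. WX l \<noteq> topspace (X l)}" using fin_act finite_subset by blast
    moreover have "\<forall>l\<in>Lam. openin (X l) (WX l)" using opX by (auto simp: WX_def)
    ultimately show ?thesis by (simp add: openin_PiE_gen)
  qed
  moreover have "openin Y WY" using opY by (simp add: WY_def)
  ultimately have op: "openin (prod_topology Y (product_topology X Lam)) (WY \<times> PiE Lam WX)"
    by (simp add: openin_prod_Times_iff)
  have zW: "z \<in> WY \<times> PiE Lam WX"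
    using zS zs by (auto simp: WY_def WX_def cyl_map PiE_iff)
  have sub: "WY \<times> PiE Lam WX \<subseteq> cyl Phi SZ s"
  proof
    fix z' assume z': "z' \<in> WY \<times> PiE Lam WX"
    obtain y' x' where zs': "z' = (y', x')" by (cases z')
    have a1: "\<forall>d<?L. \<psi> y' d = \<psi> y d" using z' zs' by (auto simp: WY_def cyl_map)
    have a2: "\<forall>l\<in>act ?L. \<forall>h<?L. \<phi> l (x' l) h = \<phi> l (x l) h"
    proof (intro ballI allI impI)
      fix l h assume l: "l \<in> act ?L" and h: "h < ?L"
      then have "l \<in> Lam" by (simp add: act_iff)
      then have "x' l \<in> WX l" using z' zs' by (auto simp: PiE_iff)
      then show "\<phi> l (x' l) h = \<phi> l (x l) h" using l h by (auto simp: WX_def cyl_map)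
    qed
    have "z' \<in> SZ"
    proof -
      have "y' \<in> topspace Y" using z' zs' by (auto simp: WY_def cyl_def)
      moreover have "x' \<in> PiE Lam (\<lambda>l. topspace (X l))"
        using z' zs' by (auto simp: PiE_iff WX_def cyl_def split: if_splits)
      ultimately show ?thesis using zs' by (simp add: SZ_def)
    qed
    moreover have "Phi z' j = s ! j" if "j < ?L" for j
    proof -
      have "tup (j div 2) z' = tup (j div 2) z"
        using tup_agree[OF a1 a2] that zs zs' by auto
      then have "Phi z' j = Phi z j" by (rule Phi_from_tup)
      then show ?thesis using zin that by (simp add: cyl_def)
    qed
    ultimately show "z' \<in> cyl Phi SZ s" by (simp add: cyl_def)
  qed
  show "\<exists>T. openin (prod_topology Y (product_topology X Lam)) T \<and> z \<in> T \<and> T \<subseteq> cyl Phi SZ s"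
    using op zW sub by blast
qed

end



context PT
begin

lemma grows:
  assumes opY: "\<And>s. openin Y (cyl \<psi> (topspace Y) s)"
    and grY: "grows_into (cyl \<psi> (topspace Y)) Y"
    and grX: "\<And>l. l \<in> Lam \<Longrightarrow> grows_into (cyl (\<phi> l) (topspace (X l))) (X l)"
    and cofX: "\<And>l. l \<in> Lam \<Longrightarrow> cofin_omega \<ggreater> Rise (cyl (\<phi> l) (topspace (X l))) (X l)"
  shows "grows_into (cyl Phi SZ) (prod_topology Y (product_topology X Lam))"
  unfolding grows_into_def
proof (intro ballI allI impI)
  let ?Z = "prod_topology Y (product_topology X Lam)"
  fix p U assume p: "p \<in> topspace ?Z" and U: "nbhd ?Z p U"
  obtain y x where ps: "p = (y, x)" by (cases p)
  have pS: "p \<in> SZ" using p by (simp add: SZ_def)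
  have yx: "y \<in> topspace Y" "x \<in> PiE Lam (\<lambda>l. topspace (X l))" using p ps by auto
  obtain W where W: "openin ?Z W" "p \<in> W" "W \<subseteq> U" using U unfolding nbhd_def by blast
  obtain VY VX where V: "openin Y VY" "openin (product_topology X Lam) VX" "y \<in> VY" "x \<in> VX" "VY \<times> VX \<subseteq> W"
    using W(1,2) ps unfolding openin_prod_topology_alt by blast
  obtain Uf where Uf: "finite {i \<in> Lam. Uf i \<noteq> topspace (X i)}" "\<forall>i\<in>Lam. openin (X i) (Uf i)"
      "x \<in> PiE Lam Uf" "PiE Lam Uf \<subseteq> VX"
    using V(2,4) unfolding openin_product_topology_alt by blast
  define K where "K = {i \<in> Lam. Uf i \<noteq> topspace (X i)}"
  have nbX: "nbhd (X l) (x l) (Uf l)" if "l \<in> Lam" for l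
    unfolding nbhd_def using Uf(2,3) that openin_subset by (fastforce simp: PiE_iff)
  have "\<forall>l\<in>K. \<exists>N. \<forall>h\<ge>N. \<exists>E. finite E \<and> (\<forall>i. i \<notin> E \<longrightarrow> cyl (\<phi> l) (topspace (X l)) (map (\<phi> l (x l)) [0..<h] @ [i]) \<subseteq> Uf l)"
  proof
    fix l assume "l \<in> K"
    then have l: "l \<in> Lam" by (simp add: K_def)
    show "\<exists>N. \<forall>h\<ge>N. \<exists>E. finite E \<and> (\<forall>i. i \<notin> E \<longrightarrow> cyl (\<phi> l) (topspace (X l)) (map (\<phi> l (x l)) [0..<h] @ [i]) \<subseteq> Uf l)"
      by (rule rise_cofinite[OF grX[OF l] cofX[OF l]]) (use yx l nbX in \<open>auto simp: PiE_iff\<close>)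
  qed
  then obtain Nf where Nf: "\<forall>l\<in>K. \<forall>h\<ge>Nf l. \<exists>E. finite E \<and> (\<forall>i. i \<notin> E \<longrightarrow> cyl (\<phi> l) (topspace (X l)) (map (\<phi> l (x l)) [0..<h] @ [i]) \<subseteq> Uf l)"
    by (metis bchoice)
  define m0 where "m0 = Max (insert 0 ((\<lambda>l. kk l + Nf l) ` K))"
  have m0: "kk l + Nf l \<le> m0" if "l \<in> K" for l
    unfolding m0_def using Uf(1) that by (auto simp: K_def intro: Max_ge)
  have nbY: "nbhd Y y VY" unfolding nbhd_def using V(1,3) openin_subset by blast
  obtain d EY where d: "d \<ge> m0" "finite EY" "\<forall>i. i \<notin> EY \<longrightarrow> cyl \<psi> (topspace Y) (map (\<psi> y) [0..<d] @ [i]) \<subseteq> VY"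
    using rise_unbounded[OF bijY opY grY yx(1) nbY, of m0] by blast
  have "\<forall>l\<in>K. \<exists>E. finite E \<and> (\<forall>i. i \<notin> E \<longrightarrow> cyl (\<phi> l) (topspace (X l)) (map (\<phi> l (x l)) [0..<d - kk l] @ [i]) \<subseteq> Uf l)"
  proof
    fix l assume l: "l \<in> K"
    then have "d - kk l \<ge> Nf l" using m0[OF l] d(1) by simp
    then show "\<exists>E. finite E \<and> (\<forall>i. i \<notin> E \<longrightarrow> cyl (\<phi> l) (topspace (X l)) (map (\<phi> l (x l)) [0..<d - kk l] @ [i]) \<subseteq> Uf l)"
      using Nf l by blast
  qed
  then obtain Ef where Ef: "\<forall>l\<in>K. finite (Ef l) \<and> (\<forall>i. i \<notin> Ef l \<longrightarrow> cyl (\<phi> l) (topspace (X l)) (map (\<phi> l (x l)) [0..<d - kk l] @ [i]) \<subseteq> Uf l)"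
    by (metis bchoice)
  have "finite (EY \<union> \<Union>(Ef ` K))" using d(2) Ef Uf(1) by (auto simp: K_def)
  then obtain Nb where Nb: "EY \<union> \<Union>(Ef ` K) \<subseteq> {..<Nb}" using finite_nat_bounded by blast
  define z0 where "z0 = map (Phi p) [0..<2*d]"
  have z0s: "z0 \<in> scope (cyl Phi SZ) p" using pS by (simp add: scope_def z0_def cyl_pre)
  define C where "C = {z0 @ [n] | n. Nb \<le> n}"
  define G where "G = (\<Union>w\<in>C. cyl Phi SZ w)"
  have GS: "G \<in> shoot (cyl Phi SZ) z0"
  proof -
    have "C \<subseteq> sons z0" by (auto simp: C_def sons_def)
    moreover have "sons z0 - C \<subseteq> (\<lambda>n. z0 @ [n]) ` {..<Nb}" by (auto simp: C_def sons_def)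
    then have "finite (sons z0 - C)" by (meson finite_imageI finite_lessThan finite_subset)
    ultimately show ?thesis unfolding shoot_def G_def by blast
  qed
  have Gne: "G \<noteq> {}"
  proof -
    have "z0 @ [Nb] \<in> C" by (auto simp: C_def)
    moreover have "cyl Phi SZ (z0 @ [Nb]) \<noteq> {}" by (rule cyl_nonempty[OF bijZ])
    ultimately show ?thesis by (auto simp: G_def)
  qed
  have GU: "G \<subseteq> U"
  proof
    fix q assume "q \<in> G"
    then obtain n where n: "Nb \<le> n" "q \<in> cyl Phi SZ (z0 @ [n])" by (auto simp: G_def C_def)
    obtain y' x' where qs: "q = (y', x')" by (cases q)
    have qS: "q \<in> SZ" and qa: "\<forall>j<2*d. Phi q j = Phi p j" and qn: "Phi q (2*d) = n"
      using n(2) unfolding z0_def by (auto simp: cyl_map_snoc)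
    have y'S: "y' \<in> topspace Y" and x'S: "x' \<in> PiE Lam (\<lambda>l. topspace (X l))" using qS qs by (auto simp: SZ_def)
    have tq: "tup d' q = tup d' p" if "d' < d" for d'
      using qa that by (intro tup_eq_from_Phi) auto
    have mnq: "mn d (tup d q) = n" using qn by (simp add: Phi_def)
    have ge: "fst (tup d q) \<ge> n" "\<forall>l\<in>act d. snd (tup d q) l \<ge> n"
      using mnq fin_act unfolding mn_def by (auto intro: Min_le)
    have "y' \<in> VY"
    proof -
      have "\<psi> y' d \<notin> EY" using ge(1) n(1) Nb qs by (auto simp: tup_def)
      moreover have "y' \<in> cyl \<psi> (topspace Y) (map (\<psi> y) [0..<d] @ [\<psi> y' d])"
        unfolding cyl_map_snoc
      proof (intro conjI allI impI y'S refl)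
        fix j assume "j < d"
        then show "\<psi> y' j = \<psi> y j" using tq[of j] qs ps by (simp add: tup_def)
      qed
      ultimately show ?thesis using d(3) by blast
    qed
    moreover have "x' \<in> PiE Lam Uf"
    proof -
      have "x' l \<in> Uf l" if l: "l \<in> Lam" for l
      proof (cases "l \<in> K")
        case False
        then show ?thesis using x'S l by (auto simp: K_def PiE_iff)
      next
        case True
        have ld: "l \<in> act d" using m0[OF True] d(1) l by (simp add: act_iff)
        have "\<phi> l (x' l) (d - kk l) = snd (tup d q) l" using ld qs by (simp add: tup_def)
        then have "\<phi> l (x' l) (d - kk l) \<notin> Ef l" using ge(2) ld n(1) Nb True by force
        moreover have "x' l \<in> cyl (\<phi> l) (topspace (X l)) (map (\<phi> l (x l)) [0..<d - kk l] @ [\<phi> l (x' l) (d - kk l)])"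
          unfolding cyl_map_snoc
        proof (intro conjI allI impI refl)
          show "x' l \<in> topspace (X l)" using x'S l by (auto simp: PiE_iff)
          fix j assume j: "j < d - kk l"
          then have "kk l + j < d" by simp
          moreover have "l \<in> act (kk l + j)" using l by (simp add: act_iff)
          ultimately have "snd (tup (kk l + j) q) l = snd (tup (kk l + j) p) l" using tq by metis
          then show "\<phi> l (x' l) j = \<phi> l (x l) j" using \<open>l \<in> act (kk l + j)\<close> qs ps by (simp add: tup_def)
        qed
        ultimately show ?thesis using Ef True by blast
      qed
      moreover have "x' \<in> extensional Lam" using x'S by (simp add: PiE_iff)
      ultimately show ?thesis by (simp add: PiE_iff)
    qed
    ultimately have "q \<in> VY \<times> VX" using qs Uf(4) by blast
    then show "q \<in> U" using V(5) W(3) by blast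
  qed
  have "shoot (cyl Phi SZ) z0 \<ggreater> {U}"
    unfolding gg_def using GS Gne GU by blast
  then show "\<exists>z\<in>scope (cyl Phi SZ) p. shoot (cyl Phi SZ) z \<ggreater> {U}" using z0s by blast
qed

end



theorem corollary10:
  fixes \<Lambda> :: "'l set" and X :: "'l \<Rightarrow> 'a topology" and H :: "'l \<Rightarrow> 'a foliage"
    and Y :: "'b topology"
  assumes "\<Lambda> \<noteq> {}" and "countable \<Lambda>"
    and "\<And>i. i \<in> \<Lambda> \<Longrightarrow> pi_tree (X i) (H i)"
    and "\<And>i. i \<in> \<Lambda> \<Longrightarrow> cofin_omega \<ggreater> Rise (H i) (X i)"
    and "has_pi_tree Y"
  shows "has_pi_tree (prod_topology Y (product_topology X \<Lambda>))"
proof -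
  have rng: "range (from_nat_into \<Lambda>) = \<Lambda>" using assms(1,2) by simp
  have "\<forall>i\<in>\<Lambda>. \<exists>\<phi>. bij_betw \<phi> (topspace (X i)) UNIV \<and> H i = cyl \<phi> (topspace (X i))"
    using assms(3) rep unfolding pi_tree_def by blast
  then obtain \<phi> where \<phi>: "\<forall>i\<in>\<Lambda>. bij_betw (\<phi> i) (topspace (X i)) UNIV \<and> H i = cyl (\<phi> i) (topspace (X i))"
    by (metis bchoice)
  obtain G where G: "pi_tree Y G" using assms(5) unfolding has_pi_tree_def by blast
  then obtain \<psi> where \<psi>: "bij_betw \<psi> (topspace Y) UNIV" "G = cyl \<psi> (topspace Y)"
    using rep unfolding pi_tree_def by blast
  interpret PT \<Lambda> "from_nat_into \<Lambda>" X \<phi> Y \<psi>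
    by unfold_locales (use rng \<psi> \<phi> in auto)
  let ?Z = "prod_topology Y (product_topology X \<Lambda>)"
  have opY: "openin Y (cyl \<psi> (topspace Y) s)" for s
    using G \<psi>(2) by (auto simp: pi_tree_def baire_foliage_tree_def open_foliage_def)
  have opX: "openin (X l) (cyl (\<phi> l) (topspace (X l)) s)" if "l \<in> \<Lambda>" for l s
    using assms(3)[OF that] \<phi> that by (auto simp: pi_tree_def baire_foliage_tree_def open_foliage_def)
  have grY: "grows_into (cyl \<psi> (topspace Y)) Y" using G \<psi>(2) by (simp add: pi_tree_def)
  have grX: "grows_into (cyl (\<phi> l) (topspace (X l))) (X l)" if "l \<in> \<Lambda>" for l
    using assms(3)[OF that] \<phi> that by (auto simp: pi_tree_def)
  have cofX: "cofin_omega \<ggreater> Rise (cyl (\<phi> l) (topspace (X l))) (X l)" if "l \<in> \<Lambda>" for l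
    using assms(4)[OF that] \<phi> that by auto
  have top: "topspace ?Z = SZ" by (simp add: SZ_def)
  have "pi_tree ?Z (cyl Phi SZ)"
    unfolding pi_tree_def baire_foliage_tree_def open_foliage_def
    using open_cyl[OF opY opX] cyl_props[OF bijZ] grows[OF opY grY grX cofX] top by auto
  then show ?thesis unfolding has_pi_tree_def by blast
qed


end
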